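(* Suppose the forbidden moves $T4$, one of $F1$ or $F2$, and one of $F3$ or $F4$ are allowed, in addition to the moves $R1,R2,R3,T2,T3$. Then the moves $Fu$ and $Fv$ can be realized by finite sequences of these moves. Here $Fu$ (respectively $Fv$) is the move on Gauss diagrams which, given an arrowhead of one chord and an arrowtail of another chord that are separated on the circle by exactly one bar and no other marked point, where the two chords have the same sign (respectively opposite signs), exchanges the positions of this arrowhead and this arrowtail (the bar remaining between them, orientations and signs of chords unchanged).
   Context: A twisted knot diagram is a virtual knot diagram (an oriented generic immersed circle in the plane whose double points are either classical crossings, carrying over/under information, or virtual crossings, carrying none) which may in addition carry finitely many bars: short segments marked transversally on arcs, away from crossings. Twisted knots are equivalence classes of such diagrams under the classical Reidemeister moves $R1,R2,R3$, the virtual Reidemeister moves $V1$–$V4$, and the twisted Reidemeister moves $T1$ (a bar slides through a virtual crossing), $T2$ (two consecutive bars on an arc cancel), $T3$ (a classical crossing having a bar on each of its four incident arcs next to the crossing is replaced by the crossing with over- and under-strand exchanged, the four bars being removed). Gauss diagram of a twisted knot diagram: an oriented circle (the parametrizing circle of the knot) on which are marked, in the order met when traversing the knot from a basepoint, the two preimages of each classical crossing and one point for each bar. For each classical crossing a chord joins its two preimages, oriented from the overcrossing preimage (the arrowtail) to the undercrossing preimage (the arrowhead), and labelled by the sign $\varepsilon\in\{+,-\}$ of the crossing. Virtual crossings are not recorded. Two marked points (chord endpoints or bars) are called adjacent if no other marked point lies between them on the circle. Moves on Gauss diagrams (each may be applied in either direction): - $R1,R2,R3$: the standard Gauss-diagram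 versions of the classical Reidemeister moves, i.e. the changes of Gauss diagrams induced by classical Reidemeister moves on diagrams (e.g. $R1$ adds or removes a chord of any orientation and sign whose two endpoints are adjacent). - $T2$: add or remove two adjacent bars. - $T3$: if each endpoint of a chord is immediately preceded and immediately followed by a bar, remove these four bars, reverse the orientation of the chord and change its sign (the Gauss-diagram version of the move $T3$ above). Virtual moves and $T1$ do not change the Gauss diagram. Forbidden moves: - $T4$: add or remove a chord (of any orientation and sign) whose two endpoints are separated by exactly one bar and no other marked point (a curl with a bar). - $F1$: exchange the positions of two adjacent arrowheads of different chords (signs arbitrary). - $F2$: exchange the positions of two adjacent arrowtails of different chords (signs arbitrary). - $F3$: if two arrowheads of different chords are separated by exactly one bar and no other marked point, exchange their positions (the bar stays between them). - $F4$: the same as $F3$ for two arrowtails. *)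

theory Defs
  imports Main
begin

text \<open>A marked point on the parametrizing circle is either a bar, or an endpoint
  of a chord: Pt c h s is an endpoint of chord c, which is the arrowhead iff h
  (otherwise the arrowtail), and the chord has sign + iff s.
  A Gauss diagram is represented by the word of marked points read from a basepoint;
  changing the basepoint (rotation) or renaming chords gives the same diagram,
  which is accounted for by the moves Rot and Relabel below.\<close>

datatype mpoint = Bar | Pt nat bool bool

definition chords :: "mpoint list \<Rightarrow> nat set" where
  "chords w = {c. \<exists>h s. Pt c h s \<in> set w}"

definition gauss_word :: "mpoint list \<Rightarrow> bool" where
  "gauss_word w \<longleftrightarrow>
     (\<forall>c \<in> chords w. \<forall>h. length (filter (\<lambda>x. \<exists>s. x = Pt c h s) w) = 1) \<and>
     (\<forall>c h s h' s'. Pt c h s \<in> set w \<longrightarrow> Pt c h' s' \<in> set w \<longrightarrow> s = s')"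

fun relab :: "(nat \<Rightarrow> nat) \<Rightarrow> mpoint \<Rightarrow> mpoint" where
  "relab f Bar = Bar"
| "relab f (Pt c h s) = Pt (f c) h s"

section \<open>The moves (each written in one direction; they are used in both directions)\<close>

definition R1_add :: "mpoint list \<Rightarrow> mpoint list \<Rightarrow> bool" where
  "R1_add D D' \<longleftrightarrow> (\<exists>u v c h s. D = u @ v \<and> c \<notin> chords D \<and>
      D' = u @ [Pt c h s, Pt c (\<not> h) s] @ v)"

definition R2_add :: "mpoint list \<Rightarrow> mpoint list \<Rightarrow> bool" where
  "R2_add D D' \<longleftrightarrow> (\<exists>u v w c1 c2 s X. D = u @ v @ w \<and> c1 \<notin> chords D \<and> c2 \<notin> chords D \<and>
      c1 \<noteq> c2 \<and>
      (X = [Pt c1 True s, Pt c2 True (\<not> s)] \<or> X = [Pt c2 True (\<not> s), Pt c1 True s]) \<and>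
      D' = u @ [Pt c1 False s, Pt c2 False (\<not> s)] @ v @ X @ w)"

text \<open>R3 configuration: three strands (top T, middle M, bottom B) and chords
  a (T over M), b (T over B), c (M over B), with signs sa sb sc.
  oT: along T, a is met before b;  oM: along M, a before c;  oB: along B, b before c.
  A triangle with these data occurs in a planar diagram iff the following parity
  conditions hold (they are invariant under reversing all three orders).\<close>
definition r3_ok :: "bool \<Rightarrow> bool \<Rightarrow> bool \<Rightarrow> bool \<Rightarrow> bool \<Rightarrow> bool \<Rightarrow> bool" where
  "r3_ok sa sb sc oT oM oB \<longleftrightarrow> ((oT \<noteq> oM) = (sb \<noteq> sc)) \<and> ((oM \<noteq> oB) = (sa \<noteq> sb))"

definition ord2 :: "bool \<Rightarrow> mpoint \<Rightarrow> mpoint \<Rightarrow> mpoint list" where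
  "ord2 b x y = (if b then [x, y] else [y, x])"

definition r3_config ::
  "nat \<Rightarrow> nat \<Rightarrow> nat \<Rightarrow> bool \<Rightarrow> bool \<Rightarrow> bool \<Rightarrow> bool \<Rightarrow> bool \<Rightarrow> bool \<Rightarrow> bool \<Rightarrow>
   mpoint list \<Rightarrow> mpoint list \<Rightarrow> mpoint list \<Rightarrow> mpoint list \<Rightarrow> mpoint list" where
  "r3_config a b c sa sb sc oT oM oB TMB u1 u2 u3 u4 =
     (let PT = ord2 oT (Pt a False sa) (Pt b False sb);
          PM = ord2 oM (Pt a True sa) (Pt c False sc);
          PB = ord2 oB (Pt b True sb) (Pt c True sc)
      in if TMB then u1 @ PT @ u2 @ PM @ u3 @ PB @ u4
         else u1 @ PT @ u2 @ PB @ u3 @ PM @ u4)"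

definition R3_move :: "mpoint list \<Rightarrow> mpoint list \<Rightarrow> bool" where
  "R3_move D D' \<longleftrightarrow> (\<exists>a b c sa sb sc oT oM oB TMB u1 u2 u3 u4.
      a \<noteq> b \<and> a \<noteq> c \<and> b \<noteq> c \<and> r3_ok sa sb sc oT oM oB \<and>
      D = r3_config a b c sa sb sc oT oM oB TMB u1 u2 u3 u4 \<and>
      D' = r3_config a b c sa sb sc (\<not> oT) (\<not> oM) (\<not> oB) TMB u1 u2 u3 u4)"

definition T2_add :: "mpoint list \<Rightarrow> mpoint list \<Rightarrow> bool" where
  "T2_add D D' \<longleftrightarrow> (\<exists>u v. D = u @ v \<and> D' = u @ [Bar, Bar] @ v)"

definition T3_move :: "mpoint list \<Rightarrow> mpoint list \<Rightarrow> bool" where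
  "T3_move D D' \<longleftrightarrow> (\<exists>u1 u2 u3 c h s.
      D = u1 @ [Bar, Pt c h s, Bar] @ u2 @ [Bar, Pt c (\<not> h) s, Bar] @ u3 \<and>
      D' = u1 @ [Pt c (\<not> h) (\<not> s)] @ u2 @ [Pt c h (\<not> s)] @ u3)"

definition T4_add :: "mpoint list \<Rightarrow> mpoint list \<Rightarrow> bool" where
  "T4_add D D' \<longleftrightarrow> (\<exists>u v c h s. D = u @ v \<and> c \<notin> chords D \<and>
      D' = u @ [Pt c h s, Bar, Pt c (\<not> h) s] @ v)"

definition F12_move :: "bool \<Rightarrow> mpoint list \<Rightarrow> mpoint list \<Rightarrow> bool" where
  "F12_move h D D' \<longleftrightarrow> (\<exists>u v c d s t. c \<noteq> d \<and>
      D = u @ [Pt c h s, Pt d h t] @ v \<and> D' = u @ [Pt d h t, Pt c h s] @ v)"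

definition F34_move :: "bool \<Rightarrow> mpoint list \<Rightarrow> mpoint list \<Rightarrow> bool" where
  "F34_move h D D' \<longleftrightarrow> (\<exists>u v c d s t. c \<noteq> d \<and>
      D = u @ [Pt c h s, Bar, Pt d h t] @ v \<and> D' = u @ [Pt d h t, Bar, Pt c h s] @ v)"

definition Fuv_move :: "bool \<Rightarrow> mpoint list \<Rightarrow> mpoint list \<Rightarrow> bool" where
  "Fuv_move same D D' \<longleftrightarrow> (\<exists>u v c d h s t. c \<noteq> d \<and> (t = s \<longleftrightarrow> same) \<and>
      D = u @ [Pt c h s, Bar, Pt d (\<not> h) t] @ v \<and> D' = u @ [Pt d (\<not> h) t, Bar, Pt c h s] @ v)"

abbreviation Fu_move where "Fu_move \<equiv> Fuv_move True"
abbreviation Fv_move where "Fv_move \<equiv> Fuv_move False"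

datatype move = MR1 | MR2 | MR3 | MT2 | MT3 | MT4 | MF1 | MF2 | MF3 | MF4

fun move_rel :: "move \<Rightarrow> mpoint list \<Rightarrow> mpoint list \<Rightarrow> bool" where
  "move_rel MR1 = R1_add"
| "move_rel MR2 = R2_add"
| "move_rel MR3 = R3_move"
| "move_rel MT2 = T2_add"
| "move_rel MT3 = T3_move"
| "move_rel MT4 = T4_add"
| "move_rel MF1 = F12_move True"
| "move_rel MF2 = F12_move False"
| "move_rel MF3 = F34_move True"
| "move_rel MF4 = F34_move False"

inductive gstep :: "move set \<Rightarrow> mpoint list \<Rightarrow> mpoint list \<Rightarrow> bool" for M where
  fwd: "m \<in> M \<Longrightarrow> move_rel m D D' \<Longrightarrow> gstep M D D'"
| bwd: "m \<in> M \<Longrightarrow> move_rel m D' D \<Longrightarrow> gstep M D D'"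
| rot: "gstep M D (rotate1 D)"
| relabel: "inj f \<Longrightarrow> gstep M D (map (relab f) D)"

abbreviation realizable :: "move set \<Rightarrow> mpoint list \<Rightarrow> mpoint list \<Rightarrow> bool" where
  "realizable M D D' \<equiv> (gstep M)\<^sup>*\<^sup>* D D'"

end

theory Submission
  imports Defs
begin

definition MS :: "move \<Rightarrow> move \<Rightarrow> move set" where
  "MS Fa Fb = {MR1, MR2, MR3, MT2, MT3, MT4, Fa, Fb}"

lemma mstep: "m \<in> MS Fa Fb \<Longrightarrow> move_rel m D D' \<Longrightarrow> realizable (MS Fa Fb) D D'"
  by (rule r_into_rtranclp, rule gstep.fwd)

lemma mstepb: "m \<in> MS Fa Fb \<Longrightarrow> move_rel m D' D \<Longrightarrow> realizable (MS Fa Fb) D D'"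
  by (rule r_into_rtranclp, rule gstep.bwd)

lemma p_t2a: "W = u @ v \<Longrightarrow> W' = u @ [Bar, Bar] @ v \<Longrightarrow> realizable (MS Fa Fb) W W'"
  by (rule mstep[of MT2]) (simp add: MS_def, simp add: T2_add_def, blast)

lemma p_t2r: "W' = u @ v \<Longrightarrow> W = u @ [Bar, Bar] @ v \<Longrightarrow> realizable (MS Fa Fb) W W'"
  by (rule mstepb[of MT2]) (simp add: MS_def, simp add: T2_add_def, blast)

lemma p_t4a: "e \<notin> chords W \<Longrightarrow> W = u @ v \<Longrightarrow> W' = u @ [Pt e k r, Bar, Pt e (\<not> k) r] @ v
   \<Longrightarrow> realizable (MS Fa Fb) W W'"
  by (rule mstep[of MT4]) (simp add: MS_def, simp add: T4_add_def, blast)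

lemma p_t4r: "e \<notin> chords W' \<Longrightarrow> W' = u @ v \<Longrightarrow> W = u @ [Pt e k r, Bar, Pt e (\<not> k) r] @ v
   \<Longrightarrow> realizable (MS Fa Fb) W W'"
  by (rule mstepb[of MT4]) (simp add: MS_def, simp add: T4_add_def, blast)

lemma p_r1a: "e \<notin> chords W \<Longrightarrow> W = u @ v \<Longrightarrow> W' = u @ [Pt e k r, Pt e (\<not> k) r] @ v
   \<Longrightarrow> realizable (MS Fa Fb) W W'"
  by (rule mstep[of MR1]) (simp add: MS_def, simp add: R1_add_def, blast)

lemma p_r1r: "e \<notin> chords W' \<Longrightarrow> W' = u @ v \<Longrightarrow> W = u @ [Pt e k r, Pt e (\<not> k) r] @ v
   \<Longrightarrow> realizable (MS Fa Fb) W W'"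
  by (rule mstepb[of MR1]) (simp add: MS_def, simp add: R1_add_def, blast)

lemma p_t3f: "W = ua @ [Bar, Pt e k r, Bar] @ ub @ [Bar, Pt e (\<not> k) r, Bar] @ uc \<Longrightarrow>
   W' = ua @ [Pt e (\<not> k) (\<not> r)] @ ub @ [Pt e k (\<not> r)] @ uc
   \<Longrightarrow> realizable (MS Fa Fb) W W'"
  by (rule mstep[of MT3]) (simp add: MS_def, simp add: T3_move_def, blast)

lemma p_t3b: "W' = ua @ [Bar, Pt e k r, Bar] @ ub @ [Bar, Pt e (\<not> k) r, Bar] @ uc \<Longrightarrow>
   W = ua @ [Pt e (\<not> k) (\<not> r)] @ ub @ [Pt e k (\<not> r)] @ uc
   \<Longrightarrow> realizable (MS Fa Fb) W W'"
  by (rule mstepb[of MT3]) (simp add: MS_def, simp add: T3_move_def, blast)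

lemma p_f12: "move_rel Fa = F12_move a \<Longrightarrow> c \<noteq> d \<Longrightarrow> W = u @ [Pt c a r, Pt d a q] @ v \<Longrightarrow>
   W' = u @ [Pt d a q, Pt c a r] @ v \<Longrightarrow> realizable (MS Fa Fb) W W'"
  by (rule mstep[of Fa]) (simp add: MS_def, simp add: F12_move_def, blast)

lemma p_f34: "move_rel Fb = F34_move b \<Longrightarrow> c \<noteq> d \<Longrightarrow> W = u @ [Pt c b r, Bar, Pt d b q] @ v \<Longrightarrow>
   W' = u @ [Pt d b q, Bar, Pt c b r] @ v \<Longrightarrow> realizable (MS Fa Fb) W W'"
  by (rule mstep[of Fb]) (simp add: MS_def, simp add: F34_move_def, blast)

lemma rot_gen: "realizable M (u @ w) (w @ u)"
proof (induction u arbitrary: w)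
  case Nil then show ?case by simp
next
  case (Cons a u)
  have "gstep M ((a # u) @ w) (u @ w @ [a])"
    using gstep.rot[of M "(a # u) @ w"] by simp
  then have "realizable M ((a # u) @ w) (u @ (w @ [a]))" by simp
  also have "realizable M (u @ (w @ [a])) ((w @ [a]) @ u)" by (rule Cons.IH)
  finally show ?case by simp
qed

lemma caseA:
  assumes fa: "move_rel Fa = F12_move h" and fb: "move_rel Fb = F34_move (\<not> h)"
    and neq: "c \<noteq> d" "e \<noteq> c" "e \<noteq> d" "f \<noteq> c" "f \<noteq> d" "e \<noteq> f"
    and fr: "\<And>k r. Pt e k r \<notin> set x" "\<And>k r. Pt e k r \<notin> set y"
       "\<And>k r. Pt f k r \<notin> set x" "\<And>k r. Pt f k r \<notin> set y"
  shows "realizable (MS Fa Fb) ([Pt c h s, Bar, Pt d (\<not> h) t] @ x @ [Pt d h t] @ y) ([Pt d (\<not> h) t, Bar, Pt c h s] @ x @ [Pt d h t] @ y)"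
proof -
  note facts = fa fb neq neq[symmetric] fr
  have "realizable (MS Fa Fb) ([Pt c h s, Bar, Pt d (\<not> h) t] @ x @ [Pt d h t] @ y) ([Pt c h s, Pt e h True, Bar, Pt e (\<not> h) True, Bar, Pt d (\<not> h) t] @ x @ [Pt d h t] @ y)"
    by (rule p_t4a[where e="e" and k="h" and r="True" and u="[Pt c h s]" and v="[Bar, Pt d (\<not> h) t] @ x @ [Pt d h t] @ y"]) (simp_all add: facts chords_def)
  also have "realizable (MS Fa Fb) ([Pt c h s, Pt e h True, Bar, Pt e (\<not> h) True, Bar, Pt d (\<not> h) t] @ x @ [Pt d h t] @ y) ([Pt c h s, Pt e h True, Bar, Pt d (\<not> h) t, Bar, Pt e (\<not> h) True] @ x @ [Pt d h t] @ y)"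
    by (rule p_f34[where b="(\<not> h)" and c="e" and d="d" and r="True" and q="t" and u="[Pt c h s, Pt e h True, Bar]" and v="x @ [Pt d h t] @ y"]) (simp_all add: facts chords_def)
  also (rtranclp_trans) have "realizable (MS Fa Fb) ([Pt c h s, Pt e h True, Bar, Pt d (\<not> h) t, Bar, Pt e (\<not> h) True] @ x @ [Pt d h t] @ y) ([Pt c h s, Pt e h True, Bar, Pt d (\<not> h) t, Bar, Pt e (\<not> h) True] @ x @ [Bar, Bar, Pt d h t] @ y)"
    by (rule p_t2a[where u="[Pt c h s, Pt e h True, Bar, Pt d (\<not> h) t, Bar, Pt e (\<not> h) True] @ x" and v="[Pt d h t] @ y"]) (simp_all add: facts chords_def)
  also (rtranclp_trans) have "realizable (MS Fa Fb) ([Pt c h s, Pt e h True, Bar, Pt d (\<not> h) t, Bar, Pt e (\<not> h) True] @ x @ [Bar, Bar, Pt d h t] @ y) ([Pt c h s, Pt e h True, Bar, Pt d (\<not> h) t, Bar, Pt e (\<not> h) True] @ x @ [Bar, Bar, Pt d h t, Bar, Bar] @ y)"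
    by (rule p_t2a[where u="[Pt c h s, Pt e h True, Bar, Pt d (\<not> h) t, Bar, Pt e (\<not> h) True] @ x @ [Bar, Bar, Pt d h t]" and v="y"]) (simp_all add: facts chords_def)
  also (rtranclp_trans) have "realizable (MS Fa Fb) ([Pt c h s, Pt e h True, Bar, Pt d (\<not> h) t, Bar, Pt e (\<not> h) True] @ x @ [Bar, Bar, Pt d h t, Bar, Bar] @ y) ([Pt c h s, Pt e h True, Pt d h (\<not> t), Pt e (\<not> h) True] @ x @ [Bar, Pt d (\<not> h) (\<not> t), Bar] @ y)"
    by (rule p_t3f[where e="d" and k="(\<not> h)" and r="t" and ua="[Pt c h s, Pt e h True]" and ub="[Pt e (\<not> h) True] @ x @ [Bar]" and uc="[Bar] @ y"]) (simp_all add: facts chords_def)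
  also (rtranclp_trans) have "realizable (MS Fa Fb) ([Pt c h s, Pt e h True, Pt d h (\<not> t), Pt e (\<not> h) True] @ x @ [Bar, Pt d (\<not> h) (\<not> t), Bar] @ y) ([Pt f (\<not> h) True, Pt f h True, Pt c h s, Pt e h True, Pt d h (\<not> t), Pt e (\<not> h) True] @ x @ [Bar, Pt d (\<not> h) (\<not> t), Bar] @ y)"
    by (rule p_r1a[where e="f" and k="(\<not> h)" and r="True" and u="[]" and v="[Pt c h s, Pt e h True, Pt d h (\<not> t), Pt e (\<not> h) True] @ x @ [Bar, Pt d (\<not> h) (\<not> t), Bar] @ y"]) (simp_all add: facts chords_def)
  also (rtranclp_trans) have "realizable (MS Fa Fb) ([Pt f (\<not> h) True, Pt f h True, Pt c h s, Pt e h True, Pt d h (\<not> t), Pt e (\<not> h) True] @ x @ [Bar, Pt d (\<not> h) (\<not> t), Bar] @ y) ([Pt f (\<not> h) True, Pt f h True, Pt c h s, Pt d h (\<not> t), Pt e h True, Pt e (\<not> h) True] @ x @ [Bar, Pt d (\<not> h) (\<not> t), Bar] @ y)"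
    by (rule p_f12[where a="h" and c="e" and d="d" and r="True" and q="(\<not> t)" and u="[Pt f (\<not> h) True, Pt f h True, Pt c h s]" and v="[Pt e (\<not> h) True] @ x @ [Bar, Pt d (\<not> h) (\<not> t), Bar] @ y"]) (simp_all add: facts chords_def)
  also (rtranclp_trans) have "realizable (MS Fa Fb) ([Pt f (\<not> h) True, Pt f h True, Pt c h s, Pt d h (\<not> t), Pt e h True, Pt e (\<not> h) True] @ x @ [Bar, Pt d (\<not> h) (\<not> t), Bar] @ y) ([Pt f (\<not> h) True, Pt f h True, Pt c h s, Pt d h (\<not> t)] @ x @ [Bar, Pt d (\<not> h) (\<not> t), Bar] @ y)"
    by (rule p_r1r[where e="e" and k="h" and r="True" and u="[Pt f (\<not> h) True, Pt f h True, Pt c h s, Pt d h (\<not> t)]" and v="x @ [Bar, Pt d (\<not> h) (\<not> t), Bar] @ y"]) (simp_all add: facts chords_def)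
  also (rtranclp_trans) have "realizable (MS Fa Fb) ([Pt f (\<not> h) True, Pt f h True, Pt c h s, Pt d h (\<not> t)] @ x @ [Bar, Pt d (\<not> h) (\<not> t), Bar] @ y) ([Pt f (\<not> h) True, Pt f h True, Pt d h (\<not> t), Pt c h s] @ x @ [Bar, Pt d (\<not> h) (\<not> t), Bar] @ y)"
    by (rule p_f12[where a="h" and c="c" and d="d" and r="s" and q="(\<not> t)" and u="[Pt f (\<not> h) True, Pt f h True]" and v="x @ [Bar, Pt d (\<not> h) (\<not> t), Bar] @ y"]) (simp_all add: facts chords_def)
  also (rtranclp_trans) have "realizable (MS Fa Fb) ([Pt f (\<not> h) True, Pt f h True, Pt d h (\<not> t), Pt c h s] @ x @ [Bar, Pt d (\<not> h) (\<not> t), Bar] @ y) ([Pt f (\<not> h) True, Pt d h (\<not> t), Pt f h True, Pt c h s] @ x @ [Bar, Pt d (\<not> h) (\<not> t), Bar] @ y)"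
    by (rule p_f12[where a="h" and c="f" and d="d" and r="True" and q="(\<not> t)" and u="[Pt f (\<not> h) True]" and v="[Pt c h s] @ x @ [Bar, Pt d (\<not> h) (\<not> t), Bar] @ y"]) (simp_all add: facts chords_def)
  also (rtranclp_trans) have "realizable (MS Fa Fb) ([Pt f (\<not> h) True, Pt d h (\<not> t), Pt f h True, Pt c h s] @ x @ [Bar, Pt d (\<not> h) (\<not> t), Bar] @ y) ([Pt f (\<not> h) True, Bar, Pt d (\<not> h) t, Bar, Pt f h True, Pt c h s] @ x @ [Bar, Bar, Pt d h t, Bar, Bar] @ y)"
    by (rule p_t3b[where e="d" and k="(\<not> h)" and r="t" and ua="[Pt f (\<not> h) True]" and ub="[Pt f h True, Pt c h s] @ x @ [Bar]" and uc="[Bar] @ y"]) (simp_all add: facts chords_def)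
  also (rtranclp_trans) have "realizable (MS Fa Fb) ([Pt f (\<not> h) True, Bar, Pt d (\<not> h) t, Bar, Pt f h True, Pt c h s] @ x @ [Bar, Bar, Pt d h t, Bar, Bar] @ y) ([Pt f (\<not> h) True, Bar, Pt d (\<not> h) t, Bar, Pt f h True, Pt c h s] @ x @ [Pt d h t, Bar, Bar] @ y)"
    by (rule p_t2r[where u="[Pt f (\<not> h) True, Bar, Pt d (\<not> h) t, Bar, Pt f h True, Pt c h s] @ x" and v="[Pt d h t, Bar, Bar] @ y"]) (simp_all add: facts chords_def)
  also (rtranclp_trans) have "realizable (MS Fa Fb) ([Pt f (\<not> h) True, Bar, Pt d (\<not> h) t, Bar, Pt f h True, Pt c h s] @ x @ [Pt d h t, Bar, Bar] @ y) ([Pt f (\<not> h) True, Bar, Pt d (\<not> h) t, Bar, Pt f h True, Pt c h s] @ x @ [Pt d h t] @ y)"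
    by (rule p_t2r[where u="[Pt f (\<not> h) True, Bar, Pt d (\<not> h) t, Bar, Pt f h True, Pt c h s] @ x @ [Pt d h t]" and v="y"]) (simp_all add: facts chords_def)
  also (rtranclp_trans) have "realizable (MS Fa Fb) ([Pt f (\<not> h) True, Bar, Pt d (\<not> h) t, Bar, Pt f h True, Pt c h s] @ x @ [Pt d h t] @ y) ([Pt d (\<not> h) t, Bar, Pt f (\<not> h) True, Bar, Pt f h True, Pt c h s] @ x @ [Pt d h t] @ y)"
    by (rule p_f34[where b="(\<not> h)" and c="f" and d="d" and r="True" and q="t" and u="[]" and v="[Bar, Pt f h True, Pt c h s] @ x @ [Pt d h t] @ y"]) (simp_all add: facts chords_def)
  also (rtranclp_trans) have "realizable (MS Fa Fb) ([Pt d (\<not> h) t, Bar, Pt f (\<not> h) True, Bar, Pt f h True, Pt c h s] @ x @ [Pt d h t] @ y) ([Pt d (\<not> h) t, Bar, Pt c h s] @ x @ [Pt d h t] @ y)"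
    by (rule p_t4r[where e="f" and k="(\<not> h)" and r="True" and u="[Pt d (\<not> h) t, Bar]" and v="[Pt c h s] @ x @ [Pt d h t] @ y"]) (simp_all add: facts chords_def)
  finally (rtranclp_trans) show ?thesis .
qed

lemma caseB:
  assumes fa: "move_rel Fa = F12_move (\<not> h)" and fb: "move_rel Fb = F34_move h"
    and neq: "c \<noteq> d" "e \<noteq> c" "e \<noteq> d" "f \<noteq> c" "f \<noteq> d" "e \<noteq> f"
    and fr: "\<And>k r. Pt e k r \<notin> set x" "\<And>k r. Pt e k r \<notin> set y"
       "\<And>k r. Pt f k r \<notin> set x" "\<And>k r. Pt f k r \<notin> set y"
  shows "realizable (MS Fa Fb) ([Pt c h s, Bar, Pt d (\<not> h) t] @ x @ [Pt c (\<not> h) s] @ y) ([Pt d (\<not> h) t, Bar, Pt c h s] @ x @ [Pt c (\<not> h) s] @ y)"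
proof -
  note facts = fa fb neq neq[symmetric] fr
  have "realizable (MS Fa Fb) ([Pt c h s, Bar, Pt d (\<not> h) t] @ x @ [Pt c (\<not> h) s] @ y) ([Pt c h s, Bar, Pt e h True, Bar, Pt e (\<not> h) True, Pt d (\<not> h) t] @ x @ [Pt c (\<not> h) s] @ y)"
    by (rule p_t4a[where e="e" and k="h" and r="True" and u="[Pt c h s, Bar]" and v="[Pt d (\<not> h) t] @ x @ [Pt c (\<not> h) s] @ y"]) (simp_all add: facts chords_def)
  also have "realizable (MS Fa Fb) ([Pt c h s, Bar, Pt e h True, Bar, Pt e (\<not> h) True, Pt d (\<not> h) t] @ x @ [Pt c (\<not> h) s] @ y) ([Pt e h True, Bar, Pt c h s, Bar, Pt e (\<not> h) True, Pt d (\<not> h) t] @ x @ [Pt c (\<not> h) s] @ y)"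
    by (rule p_f34[where b="h" and c="c" and d="e" and r="s" and q="True" and u="[]" and v="[Bar, Pt e (\<not> h) True, Pt d (\<not> h) t] @ x @ [Pt c (\<not> h) s] @ y"]) (simp_all add: facts chords_def)
  also (rtranclp_trans) have "realizable (MS Fa Fb) ([Pt e h True, Bar, Pt c h s, Bar, Pt e (\<not> h) True, Pt d (\<not> h) t] @ x @ [Pt c (\<not> h) s] @ y) ([Pt e h True, Bar, Pt c h s, Bar, Pt e (\<not> h) True, Pt d (\<not> h) t] @ x @ [Bar, Bar, Pt c (\<not> h) s] @ y)"
    by (rule p_t2a[where u="[Pt e h True, Bar, Pt c h s, Bar, Pt e (\<not> h) True, Pt d (\<not> h) t] @ x" and v="[Pt c (\<not> h) s] @ y"]) (simp_all add: facts chords_def)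
  also (rtranclp_trans) have "realizable (MS Fa Fb) ([Pt e h True, Bar, Pt c h s, Bar, Pt e (\<not> h) True, Pt d (\<not> h) t] @ x @ [Bar, Bar, Pt c (\<not> h) s] @ y) ([Pt e h True, Bar, Pt c h s, Bar, Pt e (\<not> h) True, Pt d (\<not> h) t] @ x @ [Bar, Bar, Pt c (\<not> h) s, Bar, Bar] @ y)"
    by (rule p_t2a[where u="[Pt e h True, Bar, Pt c h s, Bar, Pt e (\<not> h) True, Pt d (\<not> h) t] @ x @ [Bar, Bar, Pt c (\<not> h) s]" and v="y"]) (simp_all add: facts chords_def)
  also (rtranclp_trans) have "realizable (MS Fa Fb) ([Pt e h True, Bar, Pt c h s, Bar, Pt e (\<not> h) True, Pt d (\<not> h) t] @ x @ [Bar, Bar, Pt c (\<not> h) s, Bar, Bar] @ y) ([Pt e h True, Pt c (\<not> h) (\<not> s), Pt e (\<not> h) True, Pt d (\<not> h) t] @ x @ [Bar, Pt c h (\<not> s), Bar] @ y)"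
    by (rule p_t3f[where e="c" and k="h" and r="s" and ua="[Pt e h True]" and ub="[Pt e (\<not> h) True, Pt d (\<not> h) t] @ x @ [Bar]" and uc="[Bar] @ y"]) (simp_all add: facts chords_def)
  also (rtranclp_trans) have "realizable (MS Fa Fb) ([Pt e h True, Pt c (\<not> h) (\<not> s), Pt e (\<not> h) True, Pt d (\<not> h) t] @ x @ [Bar, Pt c h (\<not> s), Bar] @ y) ([Pt e h True, Pt c (\<not> h) (\<not> s), Pt e (\<not> h) True, Pt d (\<not> h) t, Pt f (\<not> h) True, Pt f h True] @ x @ [Bar, Pt c h (\<not> s), Bar] @ y)"
    by (rule p_r1a[where e="f" and k="(\<not> h)" and r="True" and u="[Pt e h True, Pt c (\<not> h) (\<not> s), Pt e (\<not> h) True, Pt d (\<not> h) t]" and v="x @ [Bar, Pt c h (\<not> s), Bar] @ y"]) (simp_all add: facts chords_def)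
  also (rtranclp_trans) have "realizable (MS Fa Fb) ([Pt e h True, Pt c (\<not> h) (\<not> s), Pt e (\<not> h) True, Pt d (\<not> h) t, Pt f (\<not> h) True, Pt f h True] @ x @ [Bar, Pt c h (\<not> s), Bar] @ y) ([Pt e h True, Pt e (\<not> h) True, Pt c (\<not> h) (\<not> s), Pt d (\<not> h) t, Pt f (\<not> h) True, Pt f h True] @ x @ [Bar, Pt c h (\<not> s), Bar] @ y)"
    by (rule p_f12[where a="(\<not> h)" and c="c" and d="e" and r="(\<not> s)" and q="True" and u="[Pt e h True]" and v="[Pt d (\<not> h) t, Pt f (\<not> h) True, Pt f h True] @ x @ [Bar, Pt c h (\<not> s), Bar] @ y"]) (simp_all add: facts chords_def)
  also (rtranclp_trans) have "realizable (MS Fa Fb) ([Pt e h True, Pt e (\<not> h) True, Pt c (\<not> h) (\<not> s), Pt d (\<not> h) t, Pt f (\<not> h) True, Pt f h True] @ x @ [Bar, Pt c h (\<not> s), Bar] @ y) ([Pt c (\<not> h) (\<not> s), Pt d (\<not> h) t, Pt f (\<not> h) True, Pt f h True] @ x @ [Bar, Pt c h (\<not> s), Bar] @ y)"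
    by (rule p_r1r[where e="e" and k="h" and r="True" and u="[]" and v="[Pt c (\<not> h) (\<not> s), Pt d (\<not> h) t, Pt f (\<not> h) True, Pt f h True] @ x @ [Bar, Pt c h (\<not> s), Bar] @ y"]) (simp_all add: facts chords_def)
  also (rtranclp_trans) have "realizable (MS Fa Fb) ([Pt c (\<not> h) (\<not> s), Pt d (\<not> h) t, Pt f (\<not> h) True, Pt f h True] @ x @ [Bar, Pt c h (\<not> s), Bar] @ y) ([Pt d (\<not> h) t, Pt c (\<not> h) (\<not> s), Pt f (\<not> h) True, Pt f h True] @ x @ [Bar, Pt c h (\<not> s), Bar] @ y)"
    by (rule p_f12[where a="(\<not> h)" and c="c" and d="d" and r="(\<not> s)" and q="t" and u="[]" and v="[Pt f (\<not> h) True, Pt f h True] @ x @ [Bar, Pt c h (\<not> s), Bar] @ y"]) (simp_all add: facts chords_def)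
  also (rtranclp_trans) have "realizable (MS Fa Fb) ([Pt d (\<not> h) t, Pt c (\<not> h) (\<not> s), Pt f (\<not> h) True, Pt f h True] @ x @ [Bar, Pt c h (\<not> s), Bar] @ y) ([Pt d (\<not> h) t, Pt f (\<not> h) True, Pt c (\<not> h) (\<not> s), Pt f h True] @ x @ [Bar, Pt c h (\<not> s), Bar] @ y)"
    by (rule p_f12[where a="(\<not> h)" and c="c" and d="f" and r="(\<not> s)" and q="True" and u="[Pt d (\<not> h) t]" and v="[Pt f h True] @ x @ [Bar, Pt c h (\<not> s), Bar] @ y"]) (simp_all add: facts chords_def)
  also (rtranclp_trans) have "realizable (MS Fa Fb) ([Pt d (\<not> h) t, Pt f (\<not> h) True, Pt c (\<not> h) (\<not> s), Pt f h True] @ x @ [Bar, Pt c h (\<not> s), Bar] @ y) ([Pt d (\<not> h) t, Pt f (\<not> h) True, Bar, Pt c h s, Bar, Pt f h True] @ x @ [Bar, Bar, Pt c (\<not> h) s, Bar, Bar] @ y)"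
    by (rule p_t3b[where e="c" and k="h" and r="s" and ua="[Pt d (\<not> h) t, Pt f (\<not> h) True]" and ub="[Pt f h True] @ x @ [Bar]" and uc="[Bar] @ y"]) (simp_all add: facts chords_def)
  also (rtranclp_trans) have "realizable (MS Fa Fb) ([Pt d (\<not> h) t, Pt f (\<not> h) True, Bar, Pt c h s, Bar, Pt f h True] @ x @ [Bar, Bar, Pt c (\<not> h) s, Bar, Bar] @ y) ([Pt d (\<not> h) t, Pt f (\<not> h) True, Bar, Pt c h s, Bar, Pt f h True] @ x @ [Pt c (\<not> h) s, Bar, Bar] @ y)"
    by (rule p_t2r[where u="[Pt d (\<not> h) t, Pt f (\<not> h) True, Bar, Pt c h s, Bar, Pt f h True] @ x" and v="[Pt c (\<not> h) s, Bar, Bar] @ y"]) (simp_all add: facts chords_def)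
  also (rtranclp_trans) have "realizable (MS Fa Fb) ([Pt d (\<not> h) t, Pt f (\<not> h) True, Bar, Pt c h s, Bar, Pt f h True] @ x @ [Pt c (\<not> h) s, Bar, Bar] @ y) ([Pt d (\<not> h) t, Pt f (\<not> h) True, Bar, Pt c h s, Bar, Pt f h True] @ x @ [Pt c (\<not> h) s] @ y)"
    by (rule p_t2r[where u="[Pt d (\<not> h) t, Pt f (\<not> h) True, Bar, Pt c h s, Bar, Pt f h True] @ x @ [Pt c (\<not> h) s]" and v="y"]) (simp_all add: facts chords_def)
  also (rtranclp_trans) have "realizable (MS Fa Fb) ([Pt d (\<not> h) t, Pt f (\<not> h) True, Bar, Pt c h s, Bar, Pt f h True] @ x @ [Pt c (\<not> h) s] @ y) ([Pt d (\<not> h) t, Pt f (\<not> h) True, Bar, Pt f h True, Bar, Pt c h s] @ x @ [Pt c (\<not> h) s] @ y)"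
    by (rule p_f34[where b="h" and c="c" and d="f" and r="s" and q="True" and u="[Pt d (\<not> h) t, Pt f (\<not> h) True, Bar]" and v="x @ [Pt c (\<not> h) s] @ y"]) (simp_all add: facts chords_def)
  also (rtranclp_trans) have "realizable (MS Fa Fb) ([Pt d (\<not> h) t, Pt f (\<not> h) True, Bar, Pt f h True, Bar, Pt c h s] @ x @ [Pt c (\<not> h) s] @ y) ([Pt d (\<not> h) t, Bar, Pt c h s] @ x @ [Pt c (\<not> h) s] @ y)"
    by (rule p_t4r[where e="f" and k="(\<not> h)" and r="True" and u="[Pt d (\<not> h) t]" and v="[Bar, Pt c h s] @ x @ [Pt c (\<not> h) s] @ y"]) (simp_all add: facts chords_def)
  finally (rtranclp_trans) show ?thesis .
qed

lemma caseC:
  assumes fa: "move_rel Fa = F12_move h" and fb: "move_rel Fb = F34_move h"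
    and neq: "c \<noteq> d" "e \<noteq> c" "e \<noteq> d" "f \<noteq> c" "f \<noteq> d" "e \<noteq> f"
    and fr: "\<And>k r. Pt e k r \<notin> set x" "\<And>k r. Pt e k r \<notin> set y"
       "\<And>k r. Pt f k r \<notin> set x" "\<And>k r. Pt f k r \<notin> set y"
  shows "realizable (MS Fa Fb) ([Pt c h s, Bar, Pt d (\<not> h) t] @ x @ [Pt d h t] @ y) ([Pt d (\<not> h) t, Bar, Pt c h s] @ x @ [Pt d h t] @ y)"
proof -
  note facts = fa fb neq neq[symmetric] fr
  have "realizable (MS Fa Fb) ([Pt c h s, Bar, Pt d (\<not> h) t] @ x @ [Pt d h t] @ y) ([Pt c h s, Bar, Pt e (\<not> h) True, Bar, Pt e h True, Pt d (\<not> h) t] @ x @ [Pt d h t] @ y)"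
    by (rule p_t4a[where e="e" and k="(\<not> h)" and r="True" and u="[Pt c h s, Bar]" and v="[Pt d (\<not> h) t] @ x @ [Pt d h t] @ y"]) (simp_all add: facts chords_def)
  also have "realizable (MS Fa Fb) ([Pt c h s, Bar, Pt e (\<not> h) True, Bar, Pt e h True, Pt d (\<not> h) t] @ x @ [Pt d h t] @ y) ([Pt c h s, Bar, Pt e (\<not> h) True, Bar, Pt e h True, Bar, Pt d h (\<not> t), Bar] @ x @ [Bar, Pt d (\<not> h) (\<not> t), Bar] @ y)"
    by (rule p_t3b[where e="d" and k="h" and r="(\<not> t)" and ua="[Pt c h s, Bar, Pt e (\<not> h) True, Bar, Pt e h True]" and ub="x" and uc="y"]) (simp_all add: facts chords_def)
  also (rtranclp_trans) have "realizable (MS Fa Fb) ([Pt c h s, Bar, Pt e (\<not> h) True, Bar, Pt e h True, Bar, Pt d h (\<not> t), Bar] @ x @ [Bar, Pt d (\<not> h) (\<not> t), Bar] @ y) ([Pt c h s, Bar, Pt e (\<not> h) True, Bar, Pt d h (\<not> t), Bar, Pt e h True, Bar] @ x @ [Bar, Pt d (\<not> h) (\<not> t), Bar] @ y)"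
    by (rule p_f34[where b="h" and c="e" and d="d" and r="True" and q="(\<not> t)" and u="[Pt c h s, Bar, Pt e (\<not> h) True, Bar]" and v="[Bar] @ x @ [Bar, Pt d (\<not> h) (\<not> t), Bar] @ y"]) (simp_all add: facts chords_def)
  also (rtranclp_trans) have "realizable (MS Fa Fb) ([Pt c h s, Bar, Pt e (\<not> h) True, Bar, Pt d h (\<not> t), Bar, Pt e h True, Bar] @ x @ [Bar, Pt d (\<not> h) (\<not> t), Bar] @ y) ([Pt c h s, Pt e h False, Pt d h (\<not> t), Pt e (\<not> h) False] @ x @ [Bar, Pt d (\<not> h) (\<not> t), Bar] @ y)"
    by (rule p_t3f[where e="e" and k="(\<not> h)" and r="True" and ua="[Pt c h s]" and ub="[Pt d h (\<not> t)]" and uc="x @ [Bar, Pt d (\<not> h) (\<not> t), Bar] @ y"]) (simp_all add: facts chords_def)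
  also (rtranclp_trans) have "realizable (MS Fa Fb) ([Pt c h s, Pt e h False, Pt d h (\<not> t), Pt e (\<not> h) False] @ x @ [Bar, Pt d (\<not> h) (\<not> t), Bar] @ y) ([Pt f (\<not> h) True, Pt f h True, Pt c h s, Pt e h False, Pt d h (\<not> t), Pt e (\<not> h) False] @ x @ [Bar, Pt d (\<not> h) (\<not> t), Bar] @ y)"
    by (rule p_r1a[where e="f" and k="(\<not> h)" and r="True" and u="[]" and v="[Pt c h s, Pt e h False, Pt d h (\<not> t), Pt e (\<not> h) False] @ x @ [Bar, Pt d (\<not> h) (\<not> t), Bar] @ y"]) (simp_all add: facts chords_def)
  also (rtranclp_trans) have "realizable (MS Fa Fb) ([Pt f (\<not> h) True, Pt f h True, Pt c h s, Pt e h False, Pt d h (\<not> t), Pt e (\<not> h) False] @ x @ [Bar, Pt d (\<not> h) (\<not> t), Bar] @ y) ([Pt f (\<not> h) True, Pt f h True, Pt c h s, Pt d h (\<not> t), Pt e h False, Pt e (\<not> h) False] @ x @ [Bar, Pt d (\<not> h) (\<not> t), Bar] @ y)"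
    by (rule p_f12[where a="h" and c="e" and d="d" and r="False" and q="(\<not> t)" and u="[Pt f (\<not> h) True, Pt f h True, Pt c h s]" and v="[Pt e (\<not> h) False] @ x @ [Bar, Pt d (\<not> h) (\<not> t), Bar] @ y"]) (simp_all add: facts chords_def)
  also (rtranclp_trans) have "realizable (MS Fa Fb) ([Pt f (\<not> h) True, Pt f h True, Pt c h s, Pt d h (\<not> t), Pt e h False, Pt e (\<not> h) False] @ x @ [Bar, Pt d (\<not> h) (\<not> t), Bar] @ y) ([Pt f (\<not> h) True, Pt f h True, Pt c h s, Pt d h (\<not> t)] @ x @ [Bar, Pt d (\<not> h) (\<not> t), Bar] @ y)"
    by (rule p_r1r[where e="e" and k="h" and r="False" and u="[Pt f (\<not> h) True, Pt f h True, Pt c h s, Pt d h (\<not> t)]" and v="x @ [Bar, Pt d (\<not> h) (\<not> t), Bar] @ y"]) (simp_all add: facts chords_def)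
  also (rtranclp_trans) have "realizable (MS Fa Fb) ([Pt f (\<not> h) True, Pt f h True, Pt c h s, Pt d h (\<not> t)] @ x @ [Bar, Pt d (\<not> h) (\<not> t), Bar] @ y) ([Pt f (\<not> h) True, Pt f h True, Pt d h (\<not> t), Pt c h s] @ x @ [Bar, Pt d (\<not> h) (\<not> t), Bar] @ y)"
    by (rule p_f12[where a="h" and c="c" and d="d" and r="s" and q="(\<not> t)" and u="[Pt f (\<not> h) True, Pt f h True]" and v="x @ [Bar, Pt d (\<not> h) (\<not> t), Bar] @ y"]) (simp_all add: facts chords_def)
  also (rtranclp_trans) have "realizable (MS Fa Fb) ([Pt f (\<not> h) True, Pt f h True, Pt d h (\<not> t), Pt c h s] @ x @ [Bar, Pt d (\<not> h) (\<not> t), Bar] @ y) ([Pt f (\<not> h) True, Pt d h (\<not> t), Pt f h True, Pt c h s] @ x @ [Bar, Pt d (\<not> h) (\<not> t), Bar] @ y)"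
    by (rule p_f12[where a="h" and c="f" and d="d" and r="True" and q="(\<not> t)" and u="[Pt f (\<not> h) True]" and v="[Pt c h s] @ x @ [Bar, Pt d (\<not> h) (\<not> t), Bar] @ y"]) (simp_all add: facts chords_def)
  also (rtranclp_trans) have "realizable (MS Fa Fb) ([Pt f (\<not> h) True, Pt d h (\<not> t), Pt f h True, Pt c h s] @ x @ [Bar, Pt d (\<not> h) (\<not> t), Bar] @ y) ([Bar, Pt f h False, Bar, Pt d h (\<not> t), Bar, Pt f (\<not> h) False, Bar, Pt c h s] @ x @ [Bar, Pt d (\<not> h) (\<not> t), Bar] @ y)"
    by (rule p_t3b[where e="f" and k="h" and r="False" and ua="[]" and ub="[Pt d h (\<not> t)]" and uc="[Pt c h s] @ x @ [Bar, Pt d (\<not> h) (\<not> t), Bar] @ y"]) (simp_all add: facts chords_def)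
  also (rtranclp_trans) have "realizable (MS Fa Fb) ([Bar, Pt f h False, Bar, Pt d h (\<not> t), Bar, Pt f (\<not> h) False, Bar, Pt c h s] @ x @ [Bar, Pt d (\<not> h) (\<not> t), Bar] @ y) ([Bar, Pt d h (\<not> t), Bar, Pt f h False, Bar, Pt f (\<not> h) False, Bar, Pt c h s] @ x @ [Bar, Pt d (\<not> h) (\<not> t), Bar] @ y)"
    by (rule p_f34[where b="h" and c="f" and d="d" and r="False" and q="(\<not> t)" and u="[Bar]" and v="[Bar, Pt f (\<not> h) False, Bar, Pt c h s] @ x @ [Bar, Pt d (\<not> h) (\<not> t), Bar] @ y"]) (simp_all add: facts chords_def)
  also (rtranclp_trans) have "realizable (MS Fa Fb) ([Bar, Pt d h (\<not> t), Bar, Pt f h False, Bar, Pt f (\<not> h) False, Bar, Pt c h s] @ x @ [Bar, Pt d (\<not> h) (\<not> t), Bar] @ y) ([Bar, Pt d h (\<not> t), Bar, Bar, Pt c h s] @ x @ [Bar, Pt d (\<not> h) (\<not> t), Bar] @ y)"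
    by (rule p_t4r[where e="f" and k="h" and r="False" and u="[Bar, Pt d h (\<not> t), Bar]" and v="[Bar, Pt c h s] @ x @ [Bar, Pt d (\<not> h) (\<not> t), Bar] @ y"]) (simp_all add: facts chords_def)
  also (rtranclp_trans) have "realizable (MS Fa Fb) ([Bar, Pt d h (\<not> t), Bar, Bar, Pt c h s] @ x @ [Bar, Pt d (\<not> h) (\<not> t), Bar] @ y) ([Pt d (\<not> h) t, Bar, Pt c h s] @ x @ [Pt d h t] @ y)"
    by (rule p_t3f[where e="d" and k="h" and r="(\<not> t)" and ua="[]" and ub="[Bar, Pt c h s] @ x" and uc="y"]) (simp_all add: facts chords_def)
  finally (rtranclp_trans) show ?thesis .
qed

lemma caseD:
  assumes fa: "move_rel Fa = F12_move (\<not> h)" and fb: "move_rel Fb = F34_move (\<not> h)"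
    and neq: "c \<noteq> d" "e \<noteq> c" "e \<noteq> d" "f \<noteq> c" "f \<noteq> d" "e \<noteq> f"
    and fr: "\<And>k r. Pt e k r \<notin> set x" "\<And>k r. Pt e k r \<notin> set y"
       "\<And>k r. Pt f k r \<notin> set x" "\<And>k r. Pt f k r \<notin> set y"
  shows "realizable (MS Fa Fb) ([Pt c h s, Bar, Pt d (\<not> h) t] @ x @ [Pt c (\<not> h) s] @ y) ([Pt d (\<not> h) t, Bar, Pt c h s] @ x @ [Pt c (\<not> h) s] @ y)"
proof -
  note facts = fa fb neq neq[symmetric] fr
  have "realizable (MS Fa Fb) ([Pt c h s, Bar, Pt d (\<not> h) t] @ x @ [Pt c (\<not> h) s] @ y) ([Pt c h s, Pt e (\<not> h) True, Bar, Pt e h True, Bar, Pt d (\<not> h) t] @ x @ [Pt c (\<not> h) s] @ y)"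
    by (rule p_t4a[where e="e" and k="(\<not> h)" and r="True" and u="[Pt c h s]" and v="[Bar, Pt d (\<not> h) t] @ x @ [Pt c (\<not> h) s] @ y"]) (simp_all add: facts chords_def)
  also have "realizable (MS Fa Fb) ([Pt c h s, Pt e (\<not> h) True, Bar, Pt e h True, Bar, Pt d (\<not> h) t] @ x @ [Pt c (\<not> h) s] @ y) ([Bar, Pt c (\<not> h) (\<not> s), Bar, Pt e (\<not> h) True, Bar, Pt e h True, Bar, Pt d (\<not> h) t] @ x @ [Bar, Pt c h (\<not> s), Bar] @ y)"
    by (rule p_t3b[where e="c" and k="(\<not> h)" and r="(\<not> s)" and ua="[]" and ub="[Pt e (\<not> h) True, Bar, Pt e h True, Bar, Pt d (\<not> h) t] @ x" and uc="y"]) (simp_all add: facts chords_def)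
  also (rtranclp_trans) have "realizable (MS Fa Fb) ([Bar, Pt c (\<not> h) (\<not> s), Bar, Pt e (\<not> h) True, Bar, Pt e h True, Bar, Pt d (\<not> h) t] @ x @ [Bar, Pt c h (\<not> s), Bar] @ y) ([Bar, Pt e (\<not> h) True, Bar, Pt c (\<not> h) (\<not> s), Bar, Pt e h True, Bar, Pt d (\<not> h) t] @ x @ [Bar, Pt c h (\<not> s), Bar] @ y)"
    by (rule p_f34[where b="(\<not> h)" and c="c" and d="e" and r="(\<not> s)" and q="True" and u="[Bar]" and v="[Bar, Pt e h True, Bar, Pt d (\<not> h) t] @ x @ [Bar, Pt c h (\<not> s), Bar] @ y"]) (simp_all add: facts chords_def)
  also (rtranclp_trans) have "realizable (MS Fa Fb) ([Bar, Pt e (\<not> h) True, Bar, Pt c (\<not> h) (\<not> s), Bar, Pt e h True, Bar, Pt d (\<not> h) t] @ x @ [Bar, Pt c h (\<not> s), Bar] @ y) ([Pt e h False, Pt c (\<not> h) (\<not> s), Pt e (\<not> h) False, Pt d (\<not> h) t] @ x @ [Bar, Pt c h (\<not> s), Bar] @ y)"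
    by (rule p_t3f[where e="e" and k="(\<not> h)" and r="True" and ua="[]" and ub="[Pt c (\<not> h) (\<not> s)]" and uc="[Pt d (\<not> h) t] @ x @ [Bar, Pt c h (\<not> s), Bar] @ y"]) (simp_all add: facts chords_def)
  also (rtranclp_trans) have "realizable (MS Fa Fb) ([Pt e h False, Pt c (\<not> h) (\<not> s), Pt e (\<not> h) False, Pt d (\<not> h) t] @ x @ [Bar, Pt c h (\<not> s), Bar] @ y) ([Pt e h False, Pt c (\<not> h) (\<not> s), Pt e (\<not> h) False, Pt d (\<not> h) t, Pt f (\<not> h) True, Pt f h True] @ x @ [Bar, Pt c h (\<not> s), Bar] @ y)"
    by (rule p_r1a[where e="f" and k="(\<not> h)" and r="True" and u="[Pt e h False, Pt c (\<not> h) (\<not> s), Pt e (\<not> h) False, Pt d (\<not> h) t]" and v="x @ [Bar, Pt c h (\<not> s), Bar] @ y"]) (simp_all add: facts chords_def)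
  also (rtranclp_trans) have "realizable (MS Fa Fb) ([Pt e h False, Pt c (\<not> h) (\<not> s), Pt e (\<not> h) False, Pt d (\<not> h) t, Pt f (\<not> h) True, Pt f h True] @ x @ [Bar, Pt c h (\<not> s), Bar] @ y) ([Pt e h False, Pt e (\<not> h) False, Pt c (\<not> h) (\<not> s), Pt d (\<not> h) t, Pt f (\<not> h) True, Pt f h True] @ x @ [Bar, Pt c h (\<not> s), Bar] @ y)"
    by (rule p_f12[where a="(\<not> h)" and c="c" and d="e" and r="(\<not> s)" and q="False" and u="[Pt e h False]" and v="[Pt d (\<not> h) t, Pt f (\<not> h) True, Pt f h True] @ x @ [Bar, Pt c h (\<not> s), Bar] @ y"]) (simp_all add: facts chords_def)
  also (rtranclp_trans) have "realizable (MS Fa Fb) ([Pt e h False, Pt e (\<not> h) False, Pt c (\<not> h) (\<not> s), Pt d (\<not> h) t, Pt f (\<not> h) True, Pt f h True] @ x @ [Bar, Pt c h (\<not> s), Bar] @ y) ([Pt c (\<not> h) (\<not> s), Pt d (\<not> h) t, Pt f (\<not> h) True, Pt f h True] @ x @ [Bar, Pt c h (\<not> s), Bar] @ y)"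
    by (rule p_r1r[where e="e" and k="h" and r="False" and u="[]" and v="[Pt c (\<not> h) (\<not> s), Pt d (\<not> h) t, Pt f (\<not> h) True, Pt f h True] @ x @ [Bar, Pt c h (\<not> s), Bar] @ y"]) (simp_all add: facts chords_def)
  also (rtranclp_trans) have "realizable (MS Fa Fb) ([Pt c (\<not> h) (\<not> s), Pt d (\<not> h) t, Pt f (\<not> h) True, Pt f h True] @ x @ [Bar, Pt c h (\<not> s), Bar] @ y) ([Pt d (\<not> h) t, Pt c (\<not> h) (\<not> s), Pt f (\<not> h) True, Pt f h True] @ x @ [Bar, Pt c h (\<not> s), Bar] @ y)"
    by (rule p_f12[where a="(\<not> h)" and c="c" and d="d" and r="(\<not> s)" and q="t" and u="[]" and v="[Pt f (\<not> h) True, Pt f h True] @ x @ [Bar, Pt c h (\<not> s), Bar] @ y"]) (simp_all add: facts chords_def)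
  also (rtranclp_trans) have "realizable (MS Fa Fb) ([Pt d (\<not> h) t, Pt c (\<not> h) (\<not> s), Pt f (\<not> h) True, Pt f h True] @ x @ [Bar, Pt c h (\<not> s), Bar] @ y) ([Pt d (\<not> h) t, Pt f (\<not> h) True, Pt c (\<not> h) (\<not> s), Pt f h True] @ x @ [Bar, Pt c h (\<not> s), Bar] @ y)"
    by (rule p_f12[where a="(\<not> h)" and c="c" and d="f" and r="(\<not> s)" and q="True" and u="[Pt d (\<not> h) t]" and v="[Pt f h True] @ x @ [Bar, Pt c h (\<not> s), Bar] @ y"]) (simp_all add: facts chords_def)
  also (rtranclp_trans) have "realizable (MS Fa Fb) ([Pt d (\<not> h) t, Pt f (\<not> h) True, Pt c (\<not> h) (\<not> s), Pt f h True] @ x @ [Bar, Pt c h (\<not> s), Bar] @ y) ([Pt d (\<not> h) t, Bar, Pt f h False, Bar, Pt c (\<not> h) (\<not> s), Bar, Pt f (\<not> h) False, Bar] @ x @ [Bar, Pt c h (\<not> s), Bar] @ y)"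
    by (rule p_t3b[where e="f" and k="h" and r="False" and ua="[Pt d (\<not> h) t]" and ub="[Pt c (\<not> h) (\<not> s)]" and uc="x @ [Bar, Pt c h (\<not> s), Bar] @ y"]) (simp_all add: facts chords_def)
  also (rtranclp_trans) have "realizable (MS Fa Fb) ([Pt d (\<not> h) t, Bar, Pt f h False, Bar, Pt c (\<not> h) (\<not> s), Bar, Pt f (\<not> h) False, Bar] @ x @ [Bar, Pt c h (\<not> s), Bar] @ y) ([Pt d (\<not> h) t, Bar, Pt f h False, Bar, Pt f (\<not> h) False, Bar, Pt c (\<not> h) (\<not> s), Bar] @ x @ [Bar, Pt c h (\<not> s), Bar] @ y)"
    by (rule p_f34[where b="(\<not> h)" and c="c" and d="f" and r="(\<not> s)" and q="False" and u="[Pt d (\<not> h) t, Bar, Pt f h False, Bar]" and v="[Bar] @ x @ [Bar, Pt c h (\<not> s), Bar] @ y"]) (simp_all add: facts chords_def)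
  also (rtranclp_trans) have "realizable (MS Fa Fb) ([Pt d (\<not> h) t, Bar, Pt f h False, Bar, Pt f (\<not> h) False, Bar, Pt c (\<not> h) (\<not> s), Bar] @ x @ [Bar, Pt c h (\<not> s), Bar] @ y) ([Pt d (\<not> h) t, Bar, Bar, Pt c (\<not> h) (\<not> s), Bar] @ x @ [Bar, Pt c h (\<not> s), Bar] @ y)"
    by (rule p_t4r[where e="f" and k="h" and r="False" and u="[Pt d (\<not> h) t, Bar]" and v="[Bar, Pt c (\<not> h) (\<not> s), Bar] @ x @ [Bar, Pt c h (\<not> s), Bar] @ y"]) (simp_all add: facts chords_def)
  also (rtranclp_trans) have "realizable (MS Fa Fb) ([Pt d (\<not> h) t, Bar, Bar, Pt c (\<not> h) (\<not> s), Bar] @ x @ [Bar, Pt c h (\<not> s), Bar] @ y) ([Pt d (\<not> h) t, Bar, Pt c h s] @ x @ [Pt c (\<not> h) s] @ y)"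
    by (rule p_t3f[where e="c" and k="(\<not> h)" and r="(\<not> s)" and ua="[Pt d (\<not> h) t, Bar]" and ub="x" and uc="y"]) (simp_all add: facts chords_def)
  finally (rtranclp_trans) show ?thesis .
qed

lemma other_end:
  assumes gw: "gauss_word D" and D: "D = u @ L @ v" and inL: "Pt g k r \<in> set L"
    and notL: "\<And>q. Pt g (\<not> k) q \<notin> set L"
  shows "\<exists>x y. v @ u = x @ [Pt g (\<not> k) r] @ y"
proof -
  have gc: "g \<in> chords D" using inL D by (auto simp: chords_def)
  then have "length (filter (\<lambda>x. \<exists>s. x = Pt g (\<not> k) s) D) = 1"
    using gw by (auto simp: gauss_word_def)
  then obtain p where "p \<in> set (filter (\<lambda>x. \<exists>s. x = Pt g (\<not> k) s) D)"
    by (metis length_0_conv list.set_intros(1) neq_Nil_conv zero_neq_one)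
  then obtain q where q: "Pt g (\<not> k) q \<in> set D" by auto
  have "Pt g k r \<in> set D" using inL D by auto
  then have "q = r" using gw q unfolding gauss_word_def by blast
  with q notL D have "Pt g (\<not> k) r \<in> set (v @ u)" by auto
  then show ?thesis by (metis append_Cons append_Nil split_list)
qed

lemma fresh_ex: "finite (chords D)"
proof -
  have "chords D \<subseteq> (\<lambda>p. case p of Pt c _ _ \<Rightarrow> c | Bar \<Rightarrow> 0) ` set D"
    by (force simp: chords_def)
  then show ?thesis by (rule finite_subset) simp
qed

theorem lemma1:
  assumes "Fa \<in> {MF1, MF2}" and "Fb \<in> {MF3, MF4}"
    and "gauss_word D"
    and "Fu_move D D' \<or> Fv_move D D'"
  shows "realizable {MR1, MR2, MR3, MT2, MT3, MT4, Fa, Fb} D D'"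
proof -
  obtain u v c d h s t where cd: "c \<noteq> d"
    and D: "D = u @ [Pt c h s, Bar, Pt d (\<not> h) t] @ v"
    and D': "D' = u @ [Pt d (\<not> h) t, Bar, Pt c h s] @ v"
    using assms(4) unfolding Fuv_move_def by blast
  define a where "a = (Fa = MF1)"
  define b where "b = (Fb = MF3)"
  have fa: "move_rel Fa = F12_move a" using assms(1) by (auto simp: a_def)
  have fb: "move_rel Fb = F34_move b" using assms(2) by (auto simp: b_def)
  obtain e where e: "e \<notin> chords D"
    using ex_new_if_finite[OF infinite_UNIV_nat fresh_ex] by blast
  obtain f where f: "f \<notin> chords D \<union> {e}"
    using ex_new_if_finite[OF infinite_UNIV_nat, of "chords D \<union> {e}"] fresh_ex by blast
  have cD: "c \<in> chords D" and dD: "d \<in> chords D" using D by (auto simp: chords_def)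
  have neq: "c \<noteq> d" "e \<noteq> c" "e \<noteq> d" "f \<noteq> c" "f \<noteq> d" "e \<noteq> f"
    using cd e f cD dD by auto
  have setD: "set (v @ u) \<subseteq> set D" using D by auto
  have frD: "\<And>k r. Pt e k r \<notin> set (v @ u)" "\<And>k r. Pt f k r \<notin> set (v @ u)"
    using e f setD by (auto simp: chords_def)
  let ?L = "[Pt c h s, Bar, Pt d (\<not> h) t]"
  let ?L' = "[Pt d (\<not> h) t, Bar, Pt c h s]"
  have mid: "realizable (MS Fa Fb) (?L @ (v @ u)) (?L' @ (v @ u))"
  proof -
    have oc: "\<exists>x y. v @ u = x @ [Pt c (\<not> h) s] @ y"
      by (rule other_end[OF assms(3) D]) (use cd in auto)
    have od: "\<exists>x y. v @ u = x @ [Pt d (\<not> (\<not> h)) t] @ y"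
      by (rule other_end[OF assms(3) D]) (use cd in auto)
    show ?thesis
    proof (cases "a = h")
      case True
      note fa' = fa[unfolded True]
      show ?thesis
      proof (cases "b = h")
        case True
        note fb' = fb[unfolded True]
        from od obtain x y where xy: "v @ u = x @ [Pt d h t] @ y" by auto
        show ?thesis unfolding xy
          by (rule caseC[OF fa' fb' neq]) (use frD xy in auto)
      next
        case False
        then have fb': "move_rel Fb = F34_move (\<not> h)" using fb by (cases b; cases h) auto
        from od obtain x y where xy: "v @ u = x @ [Pt d h t] @ y" by auto
        show ?thesis unfolding xy
          by (rule caseA[OF fa' fb' neq]) (use frD xy in auto)
      qed
    next
      case False
      then have fa': "move_rel Fa = F12_move (\<not> h)" using fa by (cases a; cases h) auto
      show ?thesis
      proof (cases "b = h")
        case True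
        note fb' = fb[unfolded True]
        from oc obtain x y where xy: "v @ u = x @ [Pt c (\<not> h) s] @ y" by auto
        show ?thesis unfolding xy
          by (rule caseB[OF fa' fb' neq]) (use frD xy in auto)
      next
        case False
        then have fb': "move_rel Fb = F34_move (\<not> h)" using fb by (cases b; cases h) auto
        from oc obtain x y where xy: "v @ u = x @ [Pt c (\<not> h) s] @ y" by auto
        show ?thesis unfolding xy
          by (rule caseD[OF fa' fb' neq]) (use frD xy in auto)
      qed
    qed
  qed
  have "realizable (MS Fa Fb) D (?L @ (v @ u))"
    unfolding D using rot_gen[of _ u "?L @ v"] by simp
  also have "realizable (MS Fa Fb) (?L @ (v @ u)) (?L' @ (v @ u))" by (rule mid)
  also have "realizable (MS Fa Fb) (?L' @ (v @ u)) D'"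
    unfolding D' using rot_gen[of _ "?L' @ v" u] by simp
  finally show ?thesis unfolding MS_def .
qed

end
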